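(* Let $n,l,k$ be positive integers, let $\mu$ be an order-$(l+k)$ equivalence class and $\epsilon>0$. Fix $(\mathbf{i}^1,\mathbf{j}^1)\in\mu$ with $\mathbf{i}^1\in[n]^l$, $\mathbf{j}^1\in[n]^k$, and let $\gamma^l,\gamma^k$ be the equivalence classes of $\mathbf{i}^1$ and $\mathbf{j}^1$. For $a\in[l],b\in[k]$ let $\mathrm{sgn}(a,b)=+1$ if $\mathbf{i}^2_a=\mathbf{j}^2_b$ for all $(\mathbf{i}^2,\mathbf{j}^2)\in\mu$, and $\mathrm{sgn}(a,b)=-1$ if $\mathbf{i}^2_a\neq\mathbf{j}^2_b$ for all $(\mathbf{i}^2,\mathbf{j}^2)\in\mu$. Define, for $\mathbf{i}\in[n]^l,\mathbf{j}\in[n]^k$, $$\delta(\mathbf{i},\mathbf{j};\mu,\epsilon)=\mathbb{1}_{\mathbf{i}\in\gamma^l}+(1-\epsilon)\mathbb{1}_{\mathbf{i}\notin\gamma^l}+\mathbb{1}_{\mathbf{j}\in\gamma^k}+(1-\epsilon)\mathbb{1}_{\mathbf{j}\notin\gamma^k}+\sum_{a\in[l]}\sum_{b\in[k]}\mathrm{sgn}(a,b)\mathbb{1}_{\mathbf{i}_a=\mathbf{j}_b}.$$ Then for any $\mathbf{i}\in[n]^l$ and $\mathbf{j}\in[n]^k$, $(\mathbf{i},\mathbf{j})\in\mu$ if and only if $\delta(\mathbf{i},\mathbf{j};\mu,\epsilon)$ equals the maximum of $\delta(\cdot,\cdot;\mu,\epsilon)$ over $[n]^l\times[n]^k$.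
   Context: For $m\ge1$, the equivalence relation $\sim$ on $[n]^m$ relates $\mathbf{i}\sim\mathbf{j}$ iff $(i_1,\dots,i_m)=(\pi(j_1),\dots,\pi(j_m))$ for some $\pi\in S_n$; an order-$m$ equivalence class is an element of $[n]^m/_\sim$. All elements of one class share the same equality pattern among their entries, so $\mathrm{sgn}(a,b)$ is well defined. $(\mathbf{i},\mathbf{j})$ denotes concatenation of multi-indices. *)

theory Defs
  imports Complex_Main "HOL-Combinatorics.Permutations"
begin

definition tuples :: "nat \<Rightarrow> nat \<Rightarrow> nat list set" where
  "tuples n m = {xs. length xs = m \<and> set xs \<subseteq> {1..n}}"

definition idx_equiv :: "nat \<Rightarrow> nat \<Rightarrow> (nat list \<times> nat list) set" where
  "idx_equiv n m = {(i, j). i \<in> tuples n m \<and> j \<in> tuples n m \<and>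
      (\<exists>\<pi>. \<pi> permutes {1..n} \<and> i = map \<pi> j)}"

definition eq_classes :: "nat \<Rightarrow> nat \<Rightarrow> nat list set set" where
  "eq_classes n m = tuples n m // idx_equiv n m"

text \<open>sgn(a,b) for a class mu of order l+k (0-based a < l, b < k); the value 0 is
  a convention for the case that never occurs.\<close>
definition sgn_mu :: "nat list set \<Rightarrow> nat \<Rightarrow> nat \<Rightarrow> nat \<Rightarrow> real" where
  "sgn_mu \<mu> l a b =
     (if \<forall>p\<in>\<mu>. p ! a = p ! (l + b) then 1
      else if \<forall>p\<in>\<mu>. p ! a \<noteq> p ! (l + b) then -1 else 0)"

definition delta :: "nat list set \<Rightarrow> nat list set \<Rightarrow> nat list set \<Rightarrow> real
    \<Rightarrow> nat \<Rightarrow> nat \<Rightarrow> nat list \<Rightarrow> nat list \<Rightarrow> real" where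
  "delta \<mu> \<gamma>l \<gamma>k \<epsilon> l k i j =
     (if i \<in> \<gamma>l then 1 else 1 - \<epsilon>) + (if j \<in> \<gamma>k then 1 else 1 - \<epsilon>)
     + (\<Sum>a<l. \<Sum>b<k. sgn_mu \<mu> l a b * (if i ! a = j ! b then 1 else 0))"

end

theory Submission
  imports Defs
begin
definition samepat :: "nat \<Rightarrow> nat list \<Rightarrow> nat list \<Rightarrow> bool" where
  "samepat m x y = (\<forall>a<m. \<forall>b<m. (x!a = x!b) = (y!a = y!b))"

lemma perm_exists:
  assumes lx: "length x = m" and ly: "length y = m" and sx: "set x \<subseteq> {1..n}"
    and sy: "set y \<subseteq> {1..n}" and sp: "samepat m x y"
  shows "\<exists>\<pi>. \<pi> permutes {1..n} \<and> y = map \<pi> x"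
proof -
  define f where "f z = y ! (SOME a. a < m \<and> x!a = z)" for z
  have fx: "f (x!a) = y!a" if "a < m" for a
  proof -
    have "\<exists>a'. a' < m \<and> x!a' = x!a" using that by blast
    then have "(SOME a'. a' < m \<and> x!a' = x!a) < m \<and> x!(SOME a'. a' < m \<and> x!a' = x!a) = x!a"
      by (rule someI_ex)
    then show ?thesis using sp that unfolding f_def samepat_def by blast
  qed
  have bf: "bij_betw f (set x) (set y)"
  proof (rule bij_betw_imageI)
    show "inj_on f (set x)"
    proof (rule inj_onI)
      fix u v assume "u \<in> set x" "v \<in> set x" "f u = f v"
      then obtain a b where "a < m" "b < m" "u = x!a" "v = x!b" using lx by (auto simp: in_set_conv_nth)
      then show "u = v" using \<open>f u = f v\<close> fx sp unfolding samepat_def by auto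
    qed
    show "f ` set x = set y"
      using lx ly fx by (force simp: in_set_conv_nth image_iff)
  qed
  have "card (set x) = card (set y)" using bf bij_betw_same_card by blast
  then have "card ({1..n} - set x) = card ({1..n} - set y)"
    using sx sy by (simp add: card_Diff_subset)
  then obtain g where bg: "bij_betw g ({1..n} - set x) ({1..n} - set y)"
    using finite_same_card_bij by blast
  define \<pi> where "\<pi> z = (if z \<in> set x then f z else if z \<in> {1..n} then g z else z)" for z
  have b1: "bij_betw \<pi> (set x) (set y)"
    using bf by (rule bij_betw_cong[THEN iffD1, rotated]) (simp add: \<pi>_def)
  have b2: "bij_betw \<pi> ({1..n} - set x) ({1..n} - set y)"
    using bg by (rule bij_betw_cong[THEN iffD1, rotated]) (simp add: \<pi>_def)
  have "bij_betw \<pi> (set x \<union> ({1..n} - set x)) (set y \<union> ({1..n} - set y))"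
    using b1 b2 by (rule bij_betw_combine) auto
  moreover have "set x \<union> ({1..n} - set x) = {1..n}" "set y \<union> ({1..n} - set y) = {1..n}"
    using sx sy by auto
  ultimately have "bij_betw \<pi> {1..n} {1..n}" by simp
  then have "\<pi> permutes {1..n}"
    by (rule bij_imp_permutes) (use sx in \<open>auto simp: \<pi>_def\<close>)
  moreover have "y = map \<pi> x"
    by (rule nth_equalityI) (use lx ly fx in \<open>auto simp: \<pi>_def\<close>)
  ultimately show ?thesis by blast
qed

lemma idx_equiv_iff:
  "(p, q) \<in> idx_equiv n m \<longleftrightarrow> p \<in> tuples n m \<and> q \<in> tuples n m \<and> samepat m p q"
proof
  assume h: "(p, q) \<in> idx_equiv n m"
  then obtain \<pi> where \<pi>: "\<pi> permutes {1..n}" "p = map \<pi> q" and t: "p \<in> tuples n m" "q \<in> tuples n m"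
    unfolding idx_equiv_def by blast
  have "inj \<pi>" using \<pi>(1) permutes_inj by blast
  then have "samepat m p q" using \<pi>(2) t unfolding samepat_def tuples_def
    by (auto dest: injD)
  then show "p \<in> tuples n m \<and> q \<in> tuples n m \<and> samepat m p q" using t by blast
next
  assume h: "p \<in> tuples n m \<and> q \<in> tuples n m \<and> samepat m p q"
  then have "samepat m q p" unfolding samepat_def by blast
  then obtain \<pi> where "\<pi> permutes {1..n}" "p = map \<pi> q"
    using perm_exists[of q m p n] h unfolding tuples_def by blast
  then show "(p, q) \<in> idx_equiv n m" using h unfolding idx_equiv_def by blast
qed

theorem mainTheorem6:
  fixes n l k :: nat and \<mu> :: "nat list set" and \<epsilon> :: real
    and i1 j1 :: "nat list"
  assumes "n > 0" "l > 0" "k > 0"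
    and "\<mu> \<in> eq_classes n (l + k)"
    and "\<epsilon> > 0"
    and "i1 \<in> tuples n l" "j1 \<in> tuples n k" "i1 @ j1 \<in> \<mu>"
  shows "\<forall>i\<in>tuples n l. \<forall>j\<in>tuples n k.
           (i @ j \<in> \<mu> \<longleftrightarrow>
            delta \<mu> (idx_equiv n l `` {i1}) (idx_equiv n k `` {j1}) \<epsilon> l k i j =
            Max ((\<lambda>(i', j'). delta \<mu> (idx_equiv n l `` {i1}) (idx_equiv n k `` {j1}) \<epsilon> l k i' j')
                   ` (tuples n l \<times> tuples n k)))"
proof -
  note mu = assms(4) note e = assms(5) note t1 = assms(6) note t2 = assms(7) note inmu = assms(8)
  have tapp: "i @ j \<in> tuples n (l + k)" if "i \<in> tuples n l" "j \<in> tuples n k" for i j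
    using that unfolding tuples_def by auto
  obtain x where x: "x \<in> tuples n (l + k)" "\<mu> = idx_equiv n (l + k) `` {x}"
    using mu unfolding eq_classes_def by (auto elim: quotientE)
  have sx: "samepat (l + k) x (i1 @ j1)" using inmu x idx_equiv_iff by blast
  have muI: "p \<in> \<mu> \<longleftrightarrow> p \<in> tuples n (l + k) \<and> samepat (l + k) (i1 @ j1) p" for p
    using x sx idx_equiv_iff[of x p n "l+k"] unfolding samepat_def by auto
  have gl: "idx_equiv n l `` {i1} = {i \<in> tuples n l. samepat l i1 i}"
    using t1 idx_equiv_iff[of i1 _ n l] by auto
  have gk: "idx_equiv n k `` {j1} = {j \<in> tuples n k. samepat k j1 j}"
    using t2 idx_equiv_iff[of j1 _ n k] by auto
  have len1: "length i1 = l" and len2: "length j1 = k" using t1 t2 unfolding tuples_def by auto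
  have sg: "sgn_mu \<mu> l a b = (if i1!a = j1!b then 1 else -1)" if "a < l" "b < k" for a b
  proof -
    have "\<forall>p\<in>\<mu>. (p ! a = p ! (l + b)) = (i1!a = j1!b)"
    proof
      fix p assume "p \<in> \<mu>"
      then have "samepat (l + k) (i1 @ j1) p" using muI by blast
      then have "((i1 @ j1)!a = (i1 @ j1)!(l+b)) = (p ! a = p ! (l + b))"
        using that unfolding samepat_def by auto
      then show "(p ! a = p ! (l + b)) = (i1!a = j1!b)"
        using that len1 by (simp add: nth_append)
    qed
    then show ?thesis using inmu unfolding sgn_mu_def by auto
  qed
  define S :: real where "S = (\<Sum>a<l. \<Sum>b<k. if i1!a = j1!b then 1 else 0)"
  define D where "D = delta \<mu> (idx_equiv n l `` {i1}) (idx_equiv n k `` {j1}) \<epsilon> l k"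
  define cross where "cross i j = (\<forall>a<l. \<forall>b<k. (i1!a = j1!b) = (i!a = j!b))" for i j :: "nat list"
  have key: "D i j \<le> 2 + S \<and> (D i j = 2 + S \<longleftrightarrow> samepat l i1 i \<and> samepat k j1 j \<and> cross i j)"
    if ti: "i \<in> tuples n l" and tj: "j \<in> tuples n k" for i j
  proof -
    define tt :: "nat \<Rightarrow> nat \<Rightarrow> real" where
      "tt a b = (if i1!a = j1!b then 1 else 0) - sgn_mu \<mu> l a b * (if i!a = j!b then 1 else 0)" for a b
    have tt0: "tt a b \<ge> 0" "tt a b = 0 \<longleftrightarrow> (i1!a = j1!b) = (i!a = j!b)" if "a < l" "b < k" for a b
      using sg[OF that] unfolding tt_def by auto
    have C: "(\<Sum>a<l. \<Sum>b<k. sgn_mu \<mu> l a b * (if i ! a = j ! b then 1 else 0)) = S - (\<Sum>a<l. \<Sum>b<k. tt a b)"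
      unfolding S_def tt_def by (simp add: sum_subtractf)
    have inn: "(\<Sum>b<k. tt a b) \<ge> 0" if "a < l" for a using tt0(1) that by (intro sum_nonneg) auto
    have T0: "(\<Sum>a<l. \<Sum>b<k. tt a b) \<ge> 0" using inn by (rule sum_nonneg) auto
    have T: "(\<Sum>a<l. \<Sum>b<k. tt a b) = 0 \<longleftrightarrow> cross i j"
    proof -
      have "(\<Sum>a<l. \<Sum>b<k. tt a b) = 0 \<longleftrightarrow> (\<forall>a<l. (\<Sum>b<k. tt a b) = 0)"
        using inn by (subst sum_nonneg_eq_0_iff) auto
      also have "\<dots> \<longleftrightarrow> (\<forall>a<l. \<forall>b<k. tt a b = 0)"
      proof -
        have "(\<Sum>b<k. tt a b) = 0 \<longleftrightarrow> (\<forall>b<k. tt a b = 0)" if "a < l" for a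
          using tt0(1)[OF that] by (subst sum_nonneg_eq_0_iff) auto
        then show ?thesis by blast
      qed
      also have "\<dots> \<longleftrightarrow> cross i j" using tt0(2) unfolding cross_def by auto
      finally show ?thesis .
    qed
    have Dd: "D i j = (if i \<in> idx_equiv n l `` {i1} then 1 else 1 - \<epsilon>) + (if j \<in> idx_equiv n k `` {j1} then 1 else 1 - \<epsilon>)
       + (S - (\<Sum>a<l. \<Sum>b<k. tt a b))"
      unfolding D_def delta_def C by simp
    show ?thesis using Dd T T0 e ti tj unfolding gl gk by auto
  qed
  have cr1: "cross i1 j1" unfolding cross_def by auto
  have sp1: "samepat l i1 i1" "samepat k j1 j1" unfolding samepat_def by auto
  have Mx: "Max ((\<lambda>(i', j'). D i' j') ` (tuples n l \<times> tuples n k)) = 2 + S"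
  proof (rule Max_eqI)
    show "finite ((\<lambda>(i', j'). D i' j') ` (tuples n l \<times> tuples n k))"
    proof -
      have "tuples n m \<subseteq> {xs. set xs \<subseteq> {1..n} \<and> length xs = m}" for m unfolding tuples_def by auto
      then have "finite (tuples n m)" for m
        by (rule finite_subset) (rule finite_lists_length_eq, simp)
      then show ?thesis by auto
    qed
    show "y \<le> 2 + S" if "y \<in> (\<lambda>(i', j'). D i' j') ` (tuples n l \<times> tuples n k)" for y
      using that key by auto
    show "2 + S \<in> (\<lambda>(i', j'). D i' j') ` (tuples n l \<times> tuples n k)"
      using key[OF t1 t2] cr1 sp1 t1 t2 by (auto intro!: image_eqI[where x="(i1,j1)"])
  qed
  have split: "samepat (l + k) (i1 @ j1) (i @ j) \<longleftrightarrow> samepat l i1 i \<and> samepat k j1 j \<and> cross i j"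
    if "length i = l" "length j = k" for i j
  proof
    assume h: "samepat (l + k) (i1 @ j1) (i @ j)"
    have "samepat l i1 i"
      unfolding samepat_def
    proof (intro allI impI)
      fix a b assume "a < l" "b < l"
      then show "(i1 ! a = i1 ! b) = (i ! a = i ! b)"
        using h[unfolded samepat_def, rule_format, of a b] that len1 by (simp add: nth_append)
    qed
    moreover have "samepat k j1 j"
      unfolding samepat_def
    proof (intro allI impI)
      fix a b assume "a < k" "b < k"
      then show "(j1 ! a = j1 ! b) = (j ! a = j ! b)"
        using h[unfolded samepat_def, rule_format, of "l+a" "l+b"] that len1 by (simp add: nth_append)
    qed
    moreover have "cross i j"
      unfolding cross_def
    proof (intro allI impI)
      fix a b assume "a < l" "b < k"
      then show "(i1 ! a = j1 ! b) = (i ! a = j ! b)"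
        using h[unfolded samepat_def, rule_format, of a "l+b"] that len1 by (simp add: nth_append)
    qed
    ultimately show "samepat l i1 i \<and> samepat k j1 j \<and> cross i j" by blast
  next
    assume h: "samepat l i1 i \<and> samepat k j1 j \<and> cross i j"
    show "samepat (l + k) (i1 @ j1) (i @ j)"
      unfolding samepat_def
    proof (intro allI impI)
      fix a b assume ab: "a < l + k" "b < l + k"
      show "((i1 @ j1) ! a = (i1 @ j1) ! b) = ((i @ j) ! a = (i @ j) ! b)"
      proof (cases "a < l"; cases "b < l")
        assume "a < l" "b < l" then show ?thesis using h len1 that unfolding samepat_def by (simp add: nth_append)
      next
        assume "a < l" "\<not> b < l" then show ?thesis using h len1 that ab unfolding cross_def
          by (simp add: nth_append)
      next
        assume "\<not> a < l" "b < l"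
        then have "(i1 ! b = j1 ! (a - l)) = (i ! b = j ! (a - l))" using h ab unfolding cross_def by auto
        then show ?thesis using \<open>\<not> a < l\<close> \<open>b < l\<close> len1 that
          by (auto simp add: nth_append)
      next
        assume "\<not> a < l" "\<not> b < l" then show ?thesis using h len1 that ab unfolding samepat_def
          by (simp add: nth_append)
      qed
    qed
  qed
  show ?thesis
  proof (intro ballI)
    fix i j assume ti: "i \<in> tuples n l" and tj: "j \<in> tuples n k"
    have "i @ j \<in> \<mu> \<longleftrightarrow> samepat l i1 i \<and> samepat k j1 j \<and> cross i j"
      using muI tapp[OF ti tj] split ti tj unfolding tuples_def by auto
    also have "\<dots> \<longleftrightarrow> D i j = 2 + S" using key[OF ti tj] by blast
    finally show "(i @ j \<in> \<mu>) = (delta \<mu> (idx_equiv n l `` {i1}) (idx_equiv n k `` {j1}) \<epsilon> l k i j =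
            Max ((\<lambda>(i', j'). delta \<mu> (idx_equiv n l `` {i1}) (idx_equiv n k `` {j1}) \<epsilon> l k i' j')
                   ` (tuples n l \<times> tuples n k)))"
      using Mx unfolding D_def by simp
  qed
qed

end
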